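(* Let $\mathcal{K}$ be a finite simplicial complex with a fixed total order on its vertex set, let $\Lambda_S$ be its stories algebra and $\mathcal{I}\subseteq\Lambda_S$ the simplicial ideal described below. Then the quotient algebra $\Lambda_S/\mathcal{I}$ is isomorphic (as an algebra) to the incidence algebra $\mathcal{I}(\mathcal{K})$ of $\mathcal{K}$ (ordered by inclusion).
   Context: A simplicial complex $\mathcal{K}$ on a finite non-empty vertex set $V$ is a collection of non-empty subsets of $V$ containing all singletons and closed under non-empty subsets; it is a poset under inclusion; $\dim P=|P|-1$. For $P=\{v_0,\ldots,v_n\}$ in increasing vertex order, $\epsilon_{v_iP}=(-1)^i$. Incidence algebra: $\mathcal{I}(\mathcal{K})$ is the complex vector space with basis $\{|P\rangle\langle Q|:P,Q\in\mathcal{K},\ P\subseteq Q\}$ and product $|P\rangle\langle Q|\cdot|R\rangle\langle S|=\delta_{QR}|P\rangle\langle S|$. Stories algebra: $\Lambda_S=\bigoplus_{n\ge0}\Lambda_S^n$, where $\Lambda_S^n$ has basis the sequences $\langle P_0,\ldots,P_n\rangle$ of simplices with $P_{i-1}\neq P_i$ for all $i$, and product $\langle P_0,\ldots,P_n\rangle\cdot\langle Q_0,\ldots,Q_m\rangle=\langle P_0,\ldots,P_n,Q_1,\ldots,Q_m\rangle$ if $P_n=Q_0$, and $0$ otherwise. A story is fair if for each $i\ge1$ there is $v_i\in P_i$ with $P_{i-1}=P_i\setminus\{v_i\}$, otherwise unfair; for a fair story $w$, $\epsilon_w=\prod_{i=1}^n\epsilon_{v_iP_i}$. $\mathcal{I}_N^n$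 is the span of unfair $n$-stories, $\mathcal{I}_S^n$ is the span of all $\epsilon_ww-\epsilon_{w'}w'$ with $w,w'$ fair $n$-stories having the same first simplex and the same last simplex, and $\mathcal{I}=\bigoplus_{n\ge1}(\mathcal{I}_N^n\oplus\mathcal{I}_S^n)$ (a two-sided ideal of $\Lambda_S$). *)

theory Defs
  imports Complex_Main
begin

definition simplicial_complex :: "'v set \<Rightarrow> 'v set set \<Rightarrow> bool" where
  "simplicial_complex V K \<longleftrightarrow>
     finite V \<and> V \<noteq> {} \<and>
     (\<forall>P\<in>K. P \<noteq> {} \<and> P \<subseteq> V) \<and>
     (\<forall>v\<in>V. {v} \<in> K) \<and>
     (\<forall>P\<in>K. \<forall>Q. Q \<noteq> {} \<longrightarrow> Q \<subseteq> P \<longrightarrow> Q \<in> K)"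

text \<open>epsilon_{vP} = (-1)^i where v is the i-th vertex (from 0) of P in increasing order.\<close>
definition eps_vP :: "'v::linorder \<Rightarrow> 'v set \<Rightarrow> complex" where
  "eps_vP v P = (-1) ^ card {u \<in> P. u < v}"

text \<open>A story <P_0,...,P_n> is a non-empty list of simplices with consecutive entries distinct;
  it lies in degree n = length - 1.\<close>
definition is_story :: "'v set set \<Rightarrow> 'v set list \<Rightarrow> bool" where
  "is_story K w \<longleftrightarrow> w \<noteq> [] \<and> set w \<subseteq> K \<and> (\<forall>i. 0 < i \<and> i < length w \<longrightarrow> w ! (i - 1) \<noteq> w ! i)"

definition fair :: "'v set list \<Rightarrow> bool" where
  "fair w \<longleftrightarrow> (\<forall>i. 0 < i \<and> i < length w \<longrightarrow> (\<exists>v \<in> w ! i. w ! (i - 1) = w ! i - {v}))"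

text \<open>For a fair story, v_i is the unique vertex of P_i not in P_{i-1}.\<close>
definition eps_story :: "'v::linorder set list \<Rightarrow> complex" where
  "eps_story w = (\<Prod>i\<in>{1..<length w}. eps_vP (the_elem (w ! i - w ! (i - 1))) (w ! i))"

definition stories_alg :: "'v set set \<Rightarrow> ('v set list \<Rightarrow> complex) set" where
  "stories_alg K = {f. finite {w. f w \<noteq> 0} \<and> (\<forall>w. f w \<noteq> 0 \<longrightarrow> is_story K w)}"

text \<open>Product: <P_0..P_n> * <Q_0..Q_m> = <P_0..P_n,Q_1..Q_m> if P_n = Q_0, else 0,
  extended bilinearly. A story w arises as such a product exactly from the splittings
  u = take k w, v = w!(k-1) # drop k w with 1 <= k <= length w.\<close>
definition stories_mult :: "('v set list \<Rightarrow> complex) \<Rightarrow> ('v set list \<Rightarrow> complex) \<Rightarrow> ('v set list \<Rightarrow> complex)" where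
  "stories_mult f g = (\<lambda>w. \<Sum>k\<in>{1..length w}. f (take k w) * g (w ! (k - 1) # drop k w))"

definition basis_vec :: "'a \<Rightarrow> ('a \<Rightarrow> complex)" where
  "basis_vec a = (\<lambda>b. if b = a then 1 else 0)"

inductive_set cspan :: "('a \<Rightarrow> complex) set \<Rightarrow> ('a \<Rightarrow> complex) set" for G where
  zero: "(\<lambda>_. 0) \<in> cspan G"
| step: "x \<in> cspan G \<Longrightarrow> g \<in> G \<Longrightarrow> (\<lambda>a. x a + c * g a) \<in> cspan G"

definition simplicial_ideal :: "'v::linorder set set \<Rightarrow> ('v set list \<Rightarrow> complex) set" where
  "simplicial_ideal K = cspan
     ({basis_vec w | w. is_story K w \<and> length w \<ge> 2 \<and> \<not> fair w} \<union>
      {(\<lambda>u. eps_story w * basis_vec w u - eps_story w' * basis_vec w' u) | w w'.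
          is_story K w \<and> is_story K w' \<and> length w \<ge> 2 \<and> length w' = length w \<and>
          fair w \<and> fair w' \<and> hd w = hd w' \<and> last w = last w'})"

text \<open>F P Q is the coefficient of |P><Q|; supported on pairs P \<subseteq> Q of simplices.\<close>
definition incidence_alg :: "'v set set \<Rightarrow> ('v set \<Rightarrow> 'v set \<Rightarrow> complex) set" where
  "incidence_alg K = {F. \<forall>P Q. F P Q \<noteq> 0 \<longrightarrow> P \<in> K \<and> Q \<in> K \<and> P \<subseteq> Q}"

definition incidence_mult :: "'v set set \<Rightarrow> ('v set \<Rightarrow> 'v set \<Rightarrow> complex) \<Rightarrow> ('v set \<Rightarrow> 'v set \<Rightarrow> complex) \<Rightarrow> ('v set \<Rightarrow> 'v set \<Rightarrow> complex)" where
  "incidence_mult K F G = (\<lambda>P S. \<Sum>Q\<in>K. F P Q * G Q S)"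

text \<open>A/I is isomorphic to B iff there is a map phi : A -> B which is complex-linear,
  multiplicative, onto B, and identifies exactly the elements in the same coset of I;
  phi then induces the (well-defined, bijective) isomorphism A/I -> B, and conversely
  any isomorphism A/I -> B composed with the projection A -> A/I is such a phi.\<close>
definition quotient_alg_iso ::
  "('a \<Rightarrow> complex) set \<Rightarrow> (('a \<Rightarrow> complex) \<Rightarrow> ('a \<Rightarrow> complex) \<Rightarrow> ('a \<Rightarrow> complex)) \<Rightarrow>
   ('a \<Rightarrow> complex) set \<Rightarrow> 'b set \<Rightarrow> ('b \<Rightarrow> 'b \<Rightarrow> 'b) \<Rightarrow> ('b \<Rightarrow> 'b \<Rightarrow> 'b) \<Rightarrow> (complex \<Rightarrow> 'b \<Rightarrow> 'b) \<Rightarrow> bool"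
  where
  "quotient_alg_iso A multA I B multB addB scaleB \<longleftrightarrow>
     (\<exists>\<phi>. (\<forall>x\<in>A. \<phi> x \<in> B) \<and>
          (\<forall>x\<in>A. \<forall>y\<in>A. \<phi> (\<lambda>a. x a + y a) = addB (\<phi> x) (\<phi> y)) \<and>
          (\<forall>x\<in>A. \<forall>c. \<phi> (\<lambda>a. c * x a) = scaleB c (\<phi> x)) \<and>
          (\<forall>x\<in>A. \<forall>y\<in>A. \<phi> (multA x y) = multB (\<phi> x) (\<phi> y)) \<and>
          (\<forall>z\<in>B. \<exists>x\<in>A. \<phi> x = z) \<and>
          (\<forall>x\<in>A. \<forall>y\<in>A. \<phi> x = \<phi> y \<longleftrightarrow> (\<lambda>a. x a - y a) \<in> I))"

end

theory Submission
  imports Defs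
begin


definition stp :: "'v set \<Rightarrow> 'v set \<Rightarrow> bool" where
  "stp A B \<longleftrightarrow> (\<exists>v\<in>B. A = B - {v})"

lemma fair_iff: "fair w \<longleftrightarrow> successively stp w"
  unfolding fair_def successively_conv_nth stp_def
proof safe
  fix i assume H: "\<forall>i. 0 < i \<and> i < length w \<longrightarrow> (\<exists>v\<in>w ! i. w ! (i - 1) = w ! i - {v})"
    and "Suc i < length w"
  then show "\<exists>v\<in>w ! Suc i. w ! i = w ! Suc i - {v}" using H[rule_format, of "Suc i"] by auto
next
  fix i assume H: "\<forall>i. Suc i < length w \<longrightarrow> (\<exists>v\<in>w ! Suc i. w ! i = w ! Suc i - {v})"
    and "0 < i" "i < length w"
  then show "\<exists>v\<in>w ! i. w ! (i - 1) = w ! i - {v}" using H[rule_format, of "i - 1"] by auto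
qed

definition ee :: "'v::linorder set \<Rightarrow> 'v set \<Rightarrow> complex" where
  "ee A B = eps_vP (the_elem (B - A)) B"

fun epsr :: "'v::linorder set list \<Rightarrow> complex" where
  "epsr (A # B # rest) = ee A B * epsr (B # rest)"
| "epsr _ = 1"

lemma eps_story_alt: "eps_story w = (\<Prod>i<length w - 1. ee (w ! i) (w ! Suc i))"
proof -
  have "{1..<length w} = Suc ` {..<length w - 1}"
  proof (cases w)
    case Nil then show ?thesis by simp
  next
    case (Cons a w')
    then show ?thesis using image_Suc_atLeastLessThan[of 0 "length w'"]
      by (simp add: lessThan_atLeast0)
  qed
  then show ?thesis unfolding eps_story_def ee_def
    by (simp add: prod.reindex)
qed

lemma eps_story_epsr: "eps_story w = epsr w"
proof (induction w rule: epsr.induct)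
  case (1 A B rest)
  have l: "length (A # B # rest) - 1 = Suc (length (B # rest) - 1)" by simp
  show ?case unfolding eps_story_alt l prod.lessThan_Suc_shift
    using 1 by (simp add: eps_story_alt)
qed (auto simp: eps_story_alt)

lemma epsr_append: "u \<noteq> [] \<Longrightarrow> v \<noteq> [] \<Longrightarrow> last u = hd v \<Longrightarrow> epsr (u @ tl v) = epsr u * epsr v"
proof (induction u)
  case Nil then show ?case by simp
next
  case (Cons a u)
  show ?case
  proof (cases u)
    case Nil
    then show ?thesis using Cons by (cases v) auto
  next
    case (Cons b u')
    then have "u @ tl v = b # (u' @ tl v)" by simp
    then show ?thesis using Cons.IH Cons.prems \<open>u = b # u'\<close> by simp
  qed
qed

lemma eps_sq: "eps_story w * eps_story w = 1"
  unfolding eps_story_def prod.distrib[symmetric] eps_vP_def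
  by (simp add: power_mult_distrib[symmetric])

lemma chain_card:
  fixes w :: "'a set list"
  shows "successively stp w \<Longrightarrow> w \<noteq> [] \<Longrightarrow> (\<forall>X\<in>set w. finite X) \<Longrightarrow>
   hd w \<subseteq> last w \<and> card (last w) = card (hd w) + (length w - 1)"
proof (induction "stp::'a set \<Rightarrow> 'a set \<Rightarrow> bool" w rule: successively.induct)
  case (3 x y xs)
  then obtain v where v: "v \<in> y" "x = y - {v}" by (auto simp: stp_def)
  have "finite y" using 3 by auto
  then have "card y = card x + 1" using v using card_Suc_Diff1 by fastforce
  then show ?case using 3 v by auto
qed auto




definition fs :: "'v set set \<Rightarrow> 'v set \<Rightarrow> 'v set \<Rightarrow> 'v set list set" where
 "fs K P Q = {w. w \<noteq> [] \<and> set w \<subseteq> K \<and> successively stp w \<and> hd w = P \<and> last w = Q}"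

definition phi :: "'v::linorder set set \<Rightarrow> ('v set list \<Rightarrow> complex) \<Rightarrow> ('v set \<Rightarrow> 'v set \<Rightarrow> complex)" where
 "phi K f = (\<lambda>P Q. \<Sum>w\<in>fs K P Q. eps_story w * f w)"

definition rep :: "'v set set \<Rightarrow> 'v set \<Rightarrow> 'v set \<Rightarrow> 'v set list" where
 "rep K P Q = (SOME w. w \<in> fs K P Q)"

definition psi :: "'v::linorder set set \<Rightarrow> ('v set \<Rightarrow> 'v set \<Rightarrow> complex) \<Rightarrow> ('v set list \<Rightarrow> complex)" where
 "psi K F = (\<lambda>a. \<Sum>i\<in>K \<times> K. (F (fst i) (snd i) * eps_story (rep K (fst i) (snd i))) * basis_vec (rep K (fst i) (snd i)) a)"

lemma phi_lin: "phi K (\<lambda>a. \<Sum>i\<in>S. c i * f i a) P Q = (\<Sum>i\<in>S. c i * phi K (f i) P Q)"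
  unfolding phi_def by (simp add: sum_distrib_left mult_ac) (rule sum.swap)

lemma psi_lin: "psi K (\<lambda>P Q. \<Sum>i\<in>S. c i * F i P Q) a = (\<Sum>i\<in>S. c i * psi K (F i) a)"
  unfolding psi_def by (simp add: sum_distrib_left sum_distrib_right mult_ac) (rule sum.swap)

lemma phi_add: "phi K (\<lambda>a. x a + y a) P Q = phi K x P Q + phi K y P Q"
  unfolding phi_def by (simp add: distrib_left sum.distrib)

lemma phi_scale: "phi K (\<lambda>a. c * x a) P Q = c * phi K x P Q"
  unfolding phi_def by (simp add: sum_distrib_left mult_ac)

lemma phi_diff: "phi K (\<lambda>a. x a - y a) P Q = phi K x P Q - phi K y P Q"
  unfolding phi_def by (simp add: right_diff_distrib sum_subtractf)

lemma phi_basis: "finite (fs K P Q) \<Longrightarrow> phi K (basis_vec w) P Q = (if w \<in> fs K P Q then eps_story w else 0)"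
  unfolding phi_def basis_vec_def by (simp add: if_distrib cong: if_cong)

lemma cspan_add: "y \<in> cspan G \<Longrightarrow> x \<in> cspan G \<Longrightarrow> (\<lambda>a. x a + y a) \<in> cspan G"
proof (induction y rule: cspan.induct)
  case zero then show ?case by simp
next
  case (step y g c)
  then have "(\<lambda>a. (x a + y a) + c * g a) \<in> cspan G" by (intro cspan.step) auto
  then show ?case by (simp add: add.assoc)
qed

lemma cspan_scale: "x \<in> cspan G \<Longrightarrow> (\<lambda>a. c * x a) \<in> cspan G"
proof (induction x rule: cspan.induct)
  case zero then show ?case using cspan.zero by simp
next
  case (step y g d)
  then have "(\<lambda>a. c * y a + (c * d) * g a) \<in> cspan G" by (intro cspan.step) auto
  then show ?case by (simp add: distrib_left mult.assoc)
qed

lemma cspan_gen: "g \<in> G \<Longrightarrow> g \<in> cspan G"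
  using cspan.step[OF cspan.zero, of g G 1] by simp

lemma cspan_diff: "x \<in> cspan G \<Longrightarrow> y \<in> cspan G \<Longrightarrow> (\<lambda>a. x a - y a) \<in> cspan G"
  using cspan_add[OF cspan_scale[of y G "-1"], of x] by simp

lemma cspan_sum: "finite S \<Longrightarrow> (\<And>i. i \<in> S \<Longrightarrow> f i \<in> cspan G) \<Longrightarrow> (\<lambda>a. \<Sum>i\<in>S. f i a) \<in> cspan G"
proof (induction S rule: finite_induct)
  case empty then show ?case using cspan.zero by simp
next
  case (insert x F)
  then have "(\<lambda>a. (\<Sum>i\<in>F. f i a) + f x a) \<in> cspan G" by (intro cspan_add) auto
  then show ?case using insert by (simp add: add.commute)
qed

lemma fs_story: "w \<in> fs K P Q \<Longrightarrow> is_story K w"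
proof -
  assume w: "w \<in> fs K P Q"
  have s: "successively stp w" using w unfolding fs_def by auto
  have "w ! (i - 1) \<noteq> w ! i" if "0 < i" "i < length w" for i
  proof -
    have e: "Suc (i - 1) = i" using that by simp
    have "stp (w ! (i - 1)) (w ! i)"
      using successively_nth[OF s, of "i - 1"] that unfolding e by simp
    then obtain v where "v \<in> w ! i" "w ! (i - 1) = w ! i - {v}"
      unfolding stp_def using that by auto
    then show ?thesis by auto
  qed
  then show ?thesis using w unfolding fs_def is_story_def by auto
qed

context
  fixes V :: "'v::linorder set" and K :: "'v set set"
  assumes sc: "simplicial_complex V K"
begin

lemma finK: "finite K"
proof -
  have "K \<subseteq> Pow V" using sc unfolding simplicial_complex_def by auto
  then show ?thesis using sc finite_Pow_iff rev_finite_subset unfolding simplicial_complex_def by metis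
qed

lemma elemK: "X \<in> K \<Longrightarrow> finite X \<and> X \<subseteq> V \<and> X \<noteq> {}"
  using sc unfolding simplicial_complex_def by (metis rev_finite_subset)

lemma fs_props: assumes "w \<in> fs K P Q"
  shows "P \<in> K" "Q \<in> K" "P \<subseteq> Q" "card Q = card P + (length w - 1)" "w \<noteq> []"
proof -
  have w: "w \<noteq> []" "set w \<subseteq> K" "successively stp w" "hd w = P" "last w = Q"
    using assms unfolding fs_def by auto
  then show "P \<in> K" "Q \<in> K" "w \<noteq> []" by auto
  have "\<forall>X\<in>set w. finite X" using w elemK by auto
  then show "P \<subseteq> Q" "card Q = card P + (length w - 1)" using chain_card[of w] w by auto
qed

lemma fs_fin: "finite (fs K P Q)"
proof -
  have "fs K P Q \<subseteq> {w. set w \<subseteq> K \<and> length w \<le> card V + 1}"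
  proof
    fix w assume w: "w \<in> fs K P Q"
    have "card Q \<le> card V" using fs_props(2)[OF w] elemK card_mono sc
      unfolding simplicial_complex_def by metis
    then show "w \<in> {w. set w \<subseteq> K \<and> length w \<le> card V + 1}"
      using fs_props(4)[OF w] w unfolding fs_def by auto
  qed
  then show ?thesis using finite_lists_length_le[OF finK] rev_finite_subset by metis
qed

lemma fs_PP: "w \<in> fs K P P \<Longrightarrow> w = [P]"
proof -
  assume w: "w \<in> fs K P P"
  have "finite P" using fs_props(1)[OF w] elemK by auto
  then have "length w = 1" using fs_props(4,5)[OF w] by (cases w) auto
  then show "w = [P]" using w unfolding fs_def by (cases w) auto
qed

lemma fs_same_length: "w \<in> fs K P Q \<Longrightarrow> w' \<in> fs K P Q \<Longrightarrow> length w = length w'"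
  using fs_props(4,5) by (metis Suc_pred' add_left_cancel length_greater_0_conv)

lemma fs_nonempty_aux:
  "finite D \<Longrightarrow> \<forall>P. P \<noteq> {} \<longrightarrow> P \<inter> D = {} \<longrightarrow> P \<union> D \<in> K \<longrightarrow> fs K P (P \<union> D) \<noteq> {}"
proof (induction D rule: finite_induct)
  case empty
  show ?case
  proof (intro allI impI)
    fix P :: "'v set" assume "P \<union> {} \<in> K"
    then have "[P] \<in> fs K P (P \<union> {})" unfolding fs_def by simp
    then show "fs K P (P \<union> {}) \<noteq> {}" by blast
  qed
next
  case (insert x D)
  show ?case
  proof (intro allI impI)
    fix P assume P: "P \<noteq> {}" "P \<inter> insert x D = {}" "P \<union> insert x D \<in> K"
    have dc: "\<forall>P\<in>K. \<forall>Q. Q \<noteq> {} \<longrightarrow> Q \<subseteq> P \<longrightarrow> Q \<in> K"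
      using sc unfolding simplicial_complex_def by (elim conjE)
    have sub: "P \<union> D \<subseteq> P \<union> insert x D" by (rule Un_mono) (rule subset_refl, rule subset_insertI)
    have PD: "P \<union> D \<in> K" using dc P(3) sub P(1) by simp
    have PD2: "P \<inter> D = {}" using P(2) by simp
    have "fs K P (P \<union> D) \<noteq> {}" using insert.IH P(1) PD2 PD by simp
    then obtain w where w: "w \<in> fs K P (P \<union> D)" by blast
    let ?X = "P \<union> insert x D"
    have xP: "x \<notin> P" using P(2) by simp
    have "?X - {x} = P \<union> D" using xP insert.hyps(2) by simp
    then have st: "stp (P \<union> D) ?X" unfolding stp_def by (intro bexI[of _ x]) simp_all
    have w': "w \<noteq> []" "set w \<subseteq> K" "successively stp w" "hd w = P" "last w = P \<union> D"
      using w unfolding fs_def by simp_all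
    have "successively stp (w @ [?X])" using w' st by (simp add: successively_append_iff)
    then have "w @ [?X] \<in> fs K P ?X" using w' P(3) unfolding fs_def by simp
    then show "fs K P ?X \<noteq> {}" by blast
  qed
qed

lemma fs_nonempty: assumes "P \<in> K" "Q \<in> K" "P \<subseteq> Q" shows "fs K P Q \<noteq> {}"
proof -
  have f: "finite (Q - P)" using elemK[OF assms(2)] by simp
  have e: "P \<union> (Q - P) = Q" using assms(3) by blast
  have "P \<noteq> {}" using elemK[OF assms(1)] by simp
  moreover have "P \<inter> (Q - P) = {}" by blast
  ultimately have "fs K P (P \<union> (Q - P)) \<noteq> {}" using fs_nonempty_aux[OF f] e assms(2) by metis
  then show ?thesis unfolding e .
qed

lemma rep_fs: "fs K P Q \<noteq> {} \<Longrightarrow> rep K P Q \<in> fs K P Q"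
  unfolding rep_def by (simp add: some_in_eq)

end



lemma take_drop_glue: "1 \<le> k \<Longrightarrow> k \<le> length w \<Longrightarrow> take k w @ tl (drop (k - 1) w) = w"
proof -
  assume k: "1 \<le> k" "k \<le> length w"
  then obtain j where j: "k = Suc j" by (cases k) auto
  have "tl (drop j w) = drop (Suc j) w" by (simp add: drop_Suc tl_drop)
  then show ?thesis using j by simp
qed

lemma drop_last1: "u \<noteq> [] \<Longrightarrow> drop (length u - 1) u = [last u]"
proof -
  assume u: "u \<noteq> []"
  have "drop (length (butlast u)) (butlast u @ [last u]) = [last u]" by simp
  then show ?thesis using u append_butlast_last_id[OF u] length_butlast[of u] by simp
qed

lemma cons_drop: "1 \<le> k \<Longrightarrow> k \<le> length w \<Longrightarrow> w ! (k - 1) # drop k w = drop (k - 1) w"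
proof -
  assume k: "1 \<le> k" "k \<le> length w"
  then obtain j where j: "k = Suc j" by (cases k) auto
  then show ?thesis using k Cons_nth_drop_Suc[of j w] by simp
qed

lemma mult_phi:
  fixes V :: "'v::linorder set" and K :: "'v set set"
  assumes sc: "simplicial_complex V K"
  shows "phi K (stories_mult f g) P S = incidence_mult K (phi K f) (phi K g) P S"
proof -
  let ?I = "Sigma (fs K P S) (\<lambda>w. {1..length w})"
  let ?J = "Sigma K (\<lambda>Q. fs K P Q \<times> fs K Q S)"
  let ?g = "\<lambda>(w, k). eps_story w * (f (take k w) * g (drop (k - 1) w))"
  let ?h = "\<lambda>(Q, u, v). (eps_story u * f u) * (eps_story v * g v)"
  have "phi K (stories_mult f g) P S = (\<Sum>w\<in>fs K P S. \<Sum>k\<in>{1..length w}. eps_story w * (f (take k w) * g (drop (k - 1) w)))"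
    unfolding phi_def stories_mult_def sum_distrib_left
  proof (intro sum.cong refl)
    fix w :: "'v set list" and k :: nat assume "k \<in> {1..length w}"
    then have "w ! (k - 1) # drop k w = drop (k - 1) w" using cons_drop[of k w] by simp
    then show "eps_story w * (f (take k w) * g (w ! (k - 1) # drop k w)) =
          eps_story w * (f (take k w) * g (drop (k - 1) w))" by simp
  qed
  also have "\<dots> = sum ?g ?I"
    by (rule sum.Sigma) (auto simp: fs_fin[OF sc])
  also have "\<dots> = sum ?h ?J"
  proof (rule sum.reindex_bij_witness[where i = "\<lambda>(Q, u, v). (u @ tl v, length u)"
        and j = "\<lambda>(w, k). (w ! (k - 1), take k w, drop (k - 1) w)"])
    fix a assume a: "a \<in> ?I"
    obtain w k where wk: "a = (w, k)" by (cases a)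
    have w: "w \<noteq> []" "set w \<subseteq> K" "successively stp w" "hd w = P" "last w = S"
      using a wk unfolding fs_def by auto
    have k: "1 \<le> k" "k \<le> length w" using a wk by auto
    have glue: "take k w @ tl (drop (k - 1) w) = w" using take_drop_glue[OF k] .
    show "(case case a of (w, k) \<Rightarrow> (w ! (k - 1), take k w, drop (k - 1) w) of
          (Q, u, v) \<Rightarrow> (u @ tl v, length u)) = a"
      using glue k wk by auto
    have dd: "drop (k - 1) w = w ! (k - 1) # drop k w"
    proof -
      obtain j where j: "k = Suc j" using k by (cases k) auto
      then show ?thesis using k Cons_nth_drop_Suc[of j w] by simp
    qed
    have lt: "last (take k w) = w ! (k - 1)"
    proof -
      obtain j where j: "k = Suc j" using k by (cases k) auto
      have "take k w \<noteq> []" using k w(1) by simp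
      then have "last (take k w) = take k w ! (length (take k w) - 1)" by (rule last_conv_nth)
      also have "\<dots> = w ! j" using j k by simp
      finally show ?thesis using j by simp
    qed
    have sp: "w = take k w @ drop k w" "w = take (k - 1) w @ drop (k - 1) w" by simp_all
    have s1: "successively stp (take k w)" "successively stp (drop (k - 1) w)"
      using w(3) sp successively_append_iff by metis+
    have "k - 1 < length w" using k by simp
    then have in1: "w ! (k - 1) \<in> K" using w(2) nth_mem by blast
    have "take k w \<in> fs K P (w ! (k - 1))"
      using w k s1 lt set_take_subset[of k w] unfolding fs_def by auto
    moreover have "drop (k - 1) w \<in> fs K (w ! (k - 1)) S"
    proof -
      have k1: "k - 1 < length w" using k by simp
      have "last (drop (k - 1) w) = S" using last_drop[OF k1] w(5) by simp
      moreover have "hd (drop (k - 1) w) = w ! (k - 1)" using dd by simp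
      moreover have "drop (k - 1) w \<noteq> []" using k1 by simp
      moreover have "set (drop (k - 1) w) \<subseteq> K" using w(2) set_drop_subset[of "k - 1" w] by blast
      ultimately show ?thesis using s1(2) unfolding fs_def by blast
    qed
    ultimately show "(case a of (w, k) \<Rightarrow> (w ! (k - 1), take k w, drop (k - 1) w)) \<in> ?J"
      using wk in1 by auto
    have "eps_story w = eps_story (take k w) * eps_story (drop (k - 1) w)"
    proof -
      have n1: "take k w \<noteq> []" using k w(1) by simp
      have n2: "drop (k - 1) w \<noteq> []" using dd by simp
      have h2: "last (take k w) = hd (drop (k - 1) w)" using lt dd by simp
      show ?thesis unfolding eps_story_epsr
        using epsr_append[OF n1 n2 h2] glue by simp
    qed
    then show "?h (case a of (w, k) \<Rightarrow> (w ! (k - 1), take k w, drop (k - 1) w)) = ?g a"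
      using wk by (simp add: mult_ac)
  next
    fix b assume b: "b \<in> ?J"
    obtain Q u v where b': "b = (Q, u, v)" by (cases b)
    have u: "u \<noteq> []" "set u \<subseteq> K" "successively stp u" "hd u = P" "last u = Q"
      and v: "v \<noteq> []" "set v \<subseteq> K" "successively stp v" "hd v = Q" "last v = S"
      using b b' unfolding fs_def by auto
    have vv: "v = hd v # tl v" using hd_Cons_tl[OF v(1)] by simp
    have lu: "length u - 1 < length u" using u(1) by simp
    have nth: "(u @ tl v) ! (length u - 1) = Q"
    proof -
      have "(u @ tl v) ! (length u - 1) = u ! (length u - 1)" using lu by (simp add: nth_append)
      also have "\<dots> = last u" using last_conv_nth[OF u(1)] by simp
      finally show ?thesis using u(5) by simp
    qed
    have "drop (length u - 1) (u @ tl v) = drop (length u - 1) u @ tl v"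
      using lu by simp
    also have "\<dots> = v" using drop_last1[OF u(1)] u(5) v(4) vv by simp
    finally have dr: "drop (length u - 1) (u @ tl v) = v" .
    show "(case case b of (Q, u, v) \<Rightarrow> (u @ tl v, length u) of
          (w, k) \<Rightarrow> (w ! (k - 1), take k w, drop (k - 1) w)) = b"
      using b' nth dr by simp
    have sv: "successively stp (hd v # tl v)" using v(3) vv by simp
    have "successively stp (tl v)" "tl v \<noteq> [] \<longrightarrow> stp Q (hd (tl v))"
      using sv v(4) unfolding successively_Cons by auto
    then have "successively stp (u @ tl v)" using u by (auto simp: successively_append_iff)
    moreover have "last (u @ tl v) = S"
    proof (cases "tl v = []")
      case True
      then have "v = [hd v]" using vv by simp
      then have "last v = last [hd v]" by (rule arg_cong)
      then have "last v = hd v" by simp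
      then show ?thesis using True u(5) v(4) v(5) by simp
    next
      case False
      then have "last (tl v) = last v" using last_tl[of v] by simp
      then show ?thesis using False v(5) by simp
    qed
    moreover have "set (u @ tl v) \<subseteq> K" using u(2) v(2) by (cases v) auto
    ultimately have "u @ tl v \<in> fs K P S" using u unfolding fs_def by auto
    moreover have "1 \<le> length u" using u(1) by (cases u) auto
    ultimately show "(case b of (Q, u, v) \<Rightarrow> (u @ tl v, length u)) \<in> ?I"
      using b' by simp
  qed
  also have "\<dots> = (\<Sum>Q\<in>K. \<Sum>uv\<in>fs K P Q \<times> fs K Q S. (eps_story (fst uv) * f (fst uv)) * (eps_story (snd uv) * g (snd uv)))"
    by (subst sum.Sigma[symmetric]) (auto simp: fs_fin[OF sc] finK[OF sc] case_prod_beta intro!: sum.cong)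
  also have "\<dots> = incidence_mult K (phi K f) (phi K g) P S"
    unfolding incidence_mult_def phi_def sum_product
    by (intro sum.cong refl) (simp add: sum.cartesian_product case_prod_beta)
  finally show ?thesis .
qed




context
  fixes V :: "'v::linorder set" and K :: "'v set set"
  assumes sc: "simplicial_complex V K"
begin

lemma phi_in: "phi K x \<in> incidence_alg K"
  unfolding incidence_alg_def
proof (intro CollectI allI impI)
  fix P Q assume "phi K x P Q \<noteq> 0"
  then have "fs K P Q \<noteq> {}" unfolding phi_def by auto
  then obtain w where "w \<in> fs K P Q" by auto
  then show "P \<in> K \<and> Q \<in> K \<and> P \<subseteq> Q" using fs_props[OF sc] by blast
qed

lemma phi_basis': "phi K (basis_vec w) P Q = (if w \<in> fs K P Q then eps_story w else 0)"
  using phi_basis[OF fs_fin[OF sc]] .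

lemma psi_in: assumes F: "F \<in> incidence_alg K" shows "psi K F \<in> stories_alg K"
proof -
  let ?r = "\<lambda>i. rep K (fst i) (snd i)"
  have nz: "\<exists>i\<in>K \<times> K. F (fst i) (snd i) \<noteq> 0 \<and> a = ?r i" if "psi K F a \<noteq> 0" for a
  proof (rule ccontr)
    assume "\<not> ?thesis"
    then have "psi K F a = 0" unfolding psi_def basis_vec_def by (intro sum.neutral) auto
    then show False using that by simp
  qed
  have "{a. psi K F a \<noteq> 0} \<subseteq> ?r ` (K \<times> K)" using nz by blast
  then have "finite {a. psi K F a \<noteq> 0}" using finK[OF sc] finite_subset by blast
  moreover have "is_story K a" if pa: "psi K F a \<noteq> 0" for a
  proof -
    obtain i where i: "i \<in> K \<times> K" "F (fst i) (snd i) \<noteq> 0" "a = ?r i" using nz[OF pa] by blast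
    then have "fst i \<subseteq> snd i" using F unfolding incidence_alg_def by auto
    then have "fs K (fst i) (snd i) \<noteq> {}" using fs_nonempty[OF sc] i by auto
    then show ?thesis using rep_fs[OF sc] i fs_story by metis
  qed
  ultimately show ?thesis unfolding stories_alg_def by auto
qed

lemma phi_psi: assumes F: "F \<in> incidence_alg K" shows "phi K (psi K F) = F"
proof (intro ext)
  fix P Q
  let ?r = "\<lambda>i. rep K (fst i) (snd i)"
  let ?c = "\<lambda>i. F (fst i) (snd i) * eps_story (?r i)"
  have e: "psi K F = (\<lambda>a. \<Sum>i\<in>K \<times> K. ?c i * basis_vec (?r i) a)" unfolding psi_def by (rule refl)
  have "phi K (psi K F) P Q = (\<Sum>i\<in>K \<times> K. ?c i * phi K (basis_vec (?r i)) P Q)"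
    unfolding e by (rule phi_lin)
  also have "\<dots> = (\<Sum>i\<in>K \<times> K. if i = (P, Q) then F P Q else 0)"
  proof (intro sum.cong refl)
    fix i assume i: "i \<in> K \<times> K"
    show "?c i * phi K (basis_vec (?r i)) P Q = (if i = (P, Q) then F P Q else 0)"
    proof (cases "F (fst i) (snd i) = 0")
      case True then show ?thesis by auto
    next
      case False
      then have "fst i \<subseteq> snd i" using F unfolding incidence_alg_def by auto
      then have "fs K (fst i) (snd i) \<noteq> {}" using fs_nonempty[OF sc] i by auto
      then have ri: "?r i \<in> fs K (fst i) (snd i)" using rep_fs[OF sc] by metis
      have "?r i \<in> fs K P Q \<longleftrightarrow> i = (P, Q)" using ri unfolding fs_def by (cases i) auto
      then show ?thesis unfolding phi_basis' using eps_sq[of "?r i"]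
        by (auto simp: mult_ac)
    qed
  qed
  also have "\<dots> = (if (P, Q) \<in> K \<times> K then F P Q else 0)"
    by (rule sum.delta[OF finite_cartesian_product[OF finK[OF sc] finK[OF sc]]])
  also have "\<dots> = F P Q" using F unfolding incidence_alg_def by auto
  finally show "phi K (psi K F) P Q = F P Q" .
qed

lemma psi_zero: "psi K (\<lambda>_ _. 0) = (\<lambda>_. 0)"
  unfolding psi_def by simp

lemma KL: assumes w: "is_story K w"
  shows "(\<lambda>a. basis_vec w a - psi K (phi K (basis_vec w)) a) \<in> simplicial_ideal K"
proof (cases "fair w")
  case False
  then have "\<not> successively stp w" using fair_iff by blast
  then have "length w \<ge> 2"
  proof (rule contrapos_np)
    assume "\<not> length w \<ge> 2"
    then show "successively stp w" unfolding successively_conv_nth by simp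
  qed
  have "phi K (basis_vec w) = (\<lambda>_ _. 0)"
    using \<open>\<not> successively stp w\<close> by (intro ext) (simp add: phi_basis' fs_def)
  then have e: "(\<lambda>a. basis_vec w a - psi K (phi K (basis_vec w)) a) = basis_vec w"
    by (simp add: psi_zero)
  show ?thesis unfolding e simplicial_ideal_def
    by (rule cspan_gen) (use w False \<open>length w \<ge> 2\<close> in blast)
next
  case True
  let ?P = "hd w" and ?Q = "last w"
  have wfs: "w \<in> fs K P Q \<longleftrightarrow> P = ?P \<and> Q = ?Q" for P Q
    using w True fair_iff unfolding fs_def is_story_def by auto
  have PQK: "?P \<in> K" "?Q \<in> K" using w unfolding is_story_def by auto
  let ?r = "rep K ?P ?Q"
  have rfs: "?r \<in> fs K ?P ?Q" using rep_fs[OF sc] wfs by blast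
  have ph: "phi K (basis_vec w) = (\<lambda>P Q. if (P, Q) = (?P, ?Q) then eps_story w else 0)"
    by (intro ext) (simp add: phi_basis' wfs)
  have ps: "psi K (phi K (basis_vec w)) a = eps_story w * eps_story ?r * basis_vec ?r a" for a
  proof -
    let ?t = "\<lambda>i. eps_story w * eps_story (rep K (fst i) (snd i)) * basis_vec (rep K (fst i) (snd i)) a"
    have "psi K (phi K (basis_vec w)) a = (\<Sum>i\<in>K \<times> K. if i = (?P, ?Q) then ?t i else 0)"
      unfolding ph psi_def by (intro sum.cong refl) auto
    also have "\<dots> = (if (?P, ?Q) \<in> K \<times> K then ?t (?P, ?Q) else 0)"
      by (rule sum.delta[OF finite_cartesian_product[OF finK[OF sc] finK[OF sc]]])
    finally show ?thesis using PQK by simp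
  qed
  have e: "(\<lambda>a. basis_vec w a - psi K (phi K (basis_vec w)) a) =
      (\<lambda>a. eps_story w * (eps_story w * basis_vec w a - eps_story ?r * basis_vec ?r a))"
    unfolding ps using eps_sq[of w] by (intro ext) (simp add: algebra_simps)
  show ?thesis
  proof (cases "length w \<ge> 2")
    case True
    have "length ?r = length w" using fs_same_length[OF sc rfs] wfs by auto
    moreover have "is_story K ?r" using fs_story[OF rfs] .
    moreover have "fair ?r" "hd ?r = ?P" "last ?r = ?Q"
      using rfs unfolding fs_def fair_iff by auto
    ultimately have gen: "(\<lambda>u. eps_story w * basis_vec w u - eps_story ?r * basis_vec ?r u) \<in>
      {(\<lambda>u. eps_story w * basis_vec w u - eps_story w' * basis_vec w' u) | w w'.
          is_story K w \<and> is_story K w' \<and> length w \<ge> 2 \<and> length w' = length w \<and>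
          fair w \<and> fair w' \<and> hd w = hd w' \<and> last w = last w'}"
      using True w \<open>fair w\<close> by (intro CollectI exI[of _ w] exI[of _ ?r]) simp
    have "(\<lambda>u. eps_story w * basis_vec w u - eps_story ?r * basis_vec ?r u) \<in> simplicial_ideal K"
      unfolding simplicial_ideal_def by (rule cspan_gen[OF UnI2[OF gen]])
    then show ?thesis unfolding e simplicial_ideal_def by (rule cspan_scale)
  next
    case False
    then obtain X where wX: "w = [X]" using w unfolding is_story_def
      by (cases w) (auto simp: Suc_le_eq numeral_2_eq_2)
    then have hl: "?P = X" "?Q = X" by simp_all
    have "?r \<in> fs K X X" using rfs unfolding hl .
    then have "?r = [X]" by (rule fs_PP[OF sc])
    then have "?r = w" using wX by simp
    then have "(\<lambda>a. basis_vec w a - psi K (phi K (basis_vec w)) a) = (\<lambda>_. 0)"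
      unfolding e using eps_sq[of w] by (intro ext) (simp add: algebra_simps)
    then show ?thesis unfolding simplicial_ideal_def using cspan.zero by metis
  qed
qed

lemma decomp: assumes d: "d \<in> stories_alg K"
  shows "(\<lambda>a. d a - psi K (phi K d) a) \<in> simplicial_ideal K"
proof -
  let ?S = "{w. d w \<noteq> 0}"
  have S: "finite ?S" "\<And>w. w \<in> ?S \<Longrightarrow> is_story K w" using d unfolding stories_alg_def by auto
  have dd: "d = (\<lambda>a. \<Sum>w\<in>?S. d w * basis_vec w a)"
  proof (intro ext)
    fix a
    have "(\<Sum>w\<in>?S. d w * basis_vec w a) = (\<Sum>w\<in>?S. if a = w then d w else 0)"
      unfolding basis_vec_def by (intro sum.cong refl) auto
    also have "\<dots> = (if a \<in> ?S then d a else 0)" by (rule sum.delta'[OF S(1)])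
    also have "\<dots> = d a" by auto
    finally show "d a = (\<Sum>w\<in>?S. d w * basis_vec w a)" by simp
  qed
  have pd: "phi K d = (\<lambda>P Q. \<Sum>w\<in>?S. d w * phi K (basis_vec w) P Q)"
    by (intro ext, subst dd) (rule phi_lin)
  have "psi K (phi K d) a = (\<Sum>w\<in>?S. d w * psi K (phi K (basis_vec w)) a)" for a
    unfolding pd by (rule psi_lin)
  then have "(\<lambda>a. d a - psi K (phi K d) a) =
      (\<lambda>a. \<Sum>w\<in>?S. d w * (basis_vec w a - psi K (phi K (basis_vec w)) a))"
    by (intro ext) (subst (1) dd, simp add: right_diff_distrib sum_subtractf)
  also have "\<dots> \<in> simplicial_ideal K"
    unfolding simplicial_ideal_def
    by (rule cspan_sum[OF S(1)], rule cspan_scale, fold simplicial_ideal_def, rule KL, rule S(2))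
  finally show ?thesis .
qed

lemma phi_I: assumes "g \<in> simplicial_ideal K" shows "phi K g = (\<lambda>_ _. 0)"
  using assms unfolding simplicial_ideal_def
proof (induction g rule: cspan.induct)
  case zero then show ?case unfolding phi_def by simp
next
  case (step x g c)
  have "phi K g = (\<lambda>_ _. 0)" using step(2)
  proof
    assume "g \<in> {basis_vec w | w. is_story K w \<and> length w \<ge> 2 \<and> \<not> fair w}"
    then obtain w where "g = basis_vec w" "\<not> fair w" by auto
    then show ?thesis by (intro ext) (simp add: phi_basis' fs_def fair_iff)
  next
    assume "g \<in> {(\<lambda>u. eps_story w * basis_vec w u - eps_story w' * basis_vec w' u) | w w'.
          is_story K w \<and> is_story K w' \<and> length w \<ge> 2 \<and> length w' = length w \<and>
          fair w \<and> fair w' \<and> hd w = hd w' \<and> last w = last w'}"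
    then obtain w w' where g: "g = (\<lambda>u. eps_story w * basis_vec w u - eps_story w' * basis_vec w' u)"
      and h: "is_story K w" "is_story K w'" "fair w" "fair w'" "hd w = hd w'" "last w = last w'" by blast
    have "w \<in> fs K P Q \<longleftrightarrow> w' \<in> fs K P Q" for P Q
      using h fair_iff unfolding fs_def is_story_def by auto
    then show ?thesis unfolding g
      by (intro ext) (simp add: phi_diff phi_scale phi_basis' eps_sq)
  qed
  then show ?case using step by (intro ext) (simp add: phi_add phi_scale)
qed

end

theorem mainTheorem3:
  fixes V :: "'v::linorder set" and K :: "'v set set"
  assumes "simplicial_complex V K"
  shows "quotient_alg_iso (stories_alg K) stories_mult (simplicial_ideal K)
           (incidence_alg K) (incidence_mult K)
           (\<lambda>F G P Q. F P Q + G P Q) (\<lambda>c F P Q. c * F P Q)"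
  unfolding quotient_alg_iso_def
proof (intro exI[of _ "phi K"] conjI ballI allI)
  note sc = assms
  fix x y z c
  show "phi K x \<in> incidence_alg K" using phi_in[OF sc] .
  show "phi K (\<lambda>a. x a + y a) = (\<lambda>P Q. phi K x P Q + phi K y P Q)"
    by (intro ext) (simp add: phi_add)
  show "phi K (\<lambda>a. c * x a) = (\<lambda>P Q. c * phi K x P Q)"
    by (intro ext) (simp add: phi_scale)
  show "phi K (stories_mult x y) = incidence_mult K (phi K x) (phi K y)"
    by (intro ext) (rule mult_phi[OF sc])
  assume z: "z \<in> incidence_alg K"
  show "\<exists>x\<in>stories_alg K. phi K x = z"
    using psi_in[OF sc z] phi_psi[OF sc z] by blast
next
  note sc = assms
  fix x y assume x: "x \<in> stories_alg K" and y: "y \<in> stories_alg K"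
  show "phi K x = phi K y \<longleftrightarrow> (\<lambda>a. x a - y a) \<in> simplicial_ideal K"
  proof
    assume e: "phi K x = phi K y"
    have "(\<lambda>a. (x a - psi K (phi K x) a) - (y a - psi K (phi K y) a)) \<in> simplicial_ideal K"
      unfolding simplicial_ideal_def
      by (rule cspan_diff; fold simplicial_ideal_def; rule decomp[OF sc]) (fact x, fact y)
    then show "(\<lambda>a. x a - y a) \<in> simplicial_ideal K" using e by simp
  next
    assume "(\<lambda>a. x a - y a) \<in> simplicial_ideal K"
    then have "phi K (\<lambda>a. x a - y a) = (\<lambda>_ _. 0)" by (rule phi_I[OF sc])
    then show "phi K x = phi K y" by (intro ext) (metis phi_diff right_minus_eq)
  qed
qed


end
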